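(* Let $\ell,n_1,\dots,n_\ell$ be positive integers and $K_1,\dots,K_\ell$ finite fields, and let $\mathcal{P}(\mathbf{K}^{\mathbf{n}})=\mathcal{P}(K_1^{n_1})\times\cdots\times\mathcal{P}(K_\ell^{n_\ell})$. Let $\rho:\mathcal{P}(\mathbf{K}^{\mathbf{n}})\to\mathbb{Z}_{\geq 0}$ be a rank function, i.e. for all $\mathcal{L},\mathcal{L}'$: (R1) $0\le\rho(\mathcal{L})\le\mathrm{Rk}(\mathcal{L})$; (R2) $\mathcal{L}\subseteq\mathcal{L}'$ implies $\rho(\mathcal{L})\le\rho(\mathcal{L}')$; (R3) $\rho(\mathcal{L}+\mathcal{L}')+\rho(\mathcal{L}\cap\mathcal{L}')\le\rho(\mathcal{L})+\rho(\mathcal{L}')$. Define $\rho^*(\mathcal{L})=\rho(\mathcal{L}^\perp)+\mathrm{Rk}(\mathcal{L})-\rho(\mathbf{K}^{\mathbf{n}})$. Then $\rho^*$ is also a rank function on $\mathcal{P}(\mathbf{K}^{\mathbf{n}})$, i.e. it satisfies (R1), (R2), (R3).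
   Context: $\mathcal{P}(K_i^{n_i})$ denotes the lattice of $K_i$-linear subspaces of $K_i^{n_i}$. Elements of $\mathcal{P}(\mathbf{K}^{\mathbf{n}})$ are tuples $\mathcal{L}=(\mathcal{L}_1,\dots,\mathcal{L}_\ell)$; inclusion $\subseteq$, sum $+$, intersection $\cap$ and orthogonal complement $\mathcal{L}^\perp=(\mathcal{L}_1^\perp,\dots,\mathcal{L}_\ell^\perp)$ are taken componentwise, where $\mathcal{L}_i^\perp$ is the orthogonal complement in $K_i^{n_i}$ with respect to the standard bilinear form. $\mathrm{Rk}(\mathcal{L})=\sum_{i=1}^\ell\dim_{K_i}\mathcal{L}_i$, and $\mathbf{K}^{\mathbf{n}}=(K_1^{n_1},\dots,K_\ell^{n_\ell})$ is the top element. *)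

theory Defs
  imports "HOL-Algebra.Ring"
begin

text \<open>Vectors of K^n are represented as functions nat => 'a whose entries at
positions j < n lie in the carrier of K and whose entries at positions j >= n
are the zero of K (canonical representation).\<close>

definition vecs :: "('a, 'b) ring_scheme \<Rightarrow> nat \<Rightarrow> (nat \<Rightarrow> 'a) set" where
  "vecs K n = {v. (\<forall>j<n. v j \<in> carrier K) \<and> (\<forall>j. n \<le> j \<longrightarrow> v j = \<zero>\<^bsub>K\<^esub>)}"

definition vzero :: "('a, 'b) ring_scheme \<Rightarrow> nat \<Rightarrow> 'a" where
  "vzero K = (\<lambda>j. \<zero>\<^bsub>K\<^esub>)"

definition vadd :: "('a, 'b) ring_scheme \<Rightarrow> (nat \<Rightarrow> 'a) \<Rightarrow> (nat \<Rightarrow> 'a) \<Rightarrow> nat \<Rightarrow> 'a" where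
  "vadd K v w = (\<lambda>j. v j \<oplus>\<^bsub>K\<^esub> w j)"

definition vsmult :: "('a, 'b) ring_scheme \<Rightarrow> 'a \<Rightarrow> (nat \<Rightarrow> 'a) \<Rightarrow> nat \<Rightarrow> 'a" where
  "vsmult K c v = (\<lambda>j. c \<otimes>\<^bsub>K\<^esub> v j)"

definition subspace :: "('a, 'b) ring_scheme \<Rightarrow> nat \<Rightarrow> (nat \<Rightarrow> 'a) set \<Rightarrow> bool" where
  "subspace K n L \<longleftrightarrow> L \<subseteq> vecs K n \<and> vzero K \<in> L \<and>
     (\<forall>v\<in>L. \<forall>w\<in>L. vadd K v w \<in> L) \<and>
     (\<forall>c\<in>carrier K. \<forall>v\<in>L. vsmult K c v \<in> L)"

definition lincomb :: "('a, 'b) ring_scheme \<Rightarrow> ((nat \<Rightarrow> 'a) \<Rightarrow> 'a) \<Rightarrow> (nat \<Rightarrow> 'a) set \<Rightarrow> nat \<Rightarrow> 'a" where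
  "lincomb K c B = (\<lambda>j. finsum K (\<lambda>b. c b \<otimes>\<^bsub>K\<^esub> b j) B)"

definition span :: "('a, 'b) ring_scheme \<Rightarrow> (nat \<Rightarrow> 'a) set \<Rightarrow> (nat \<Rightarrow> 'a) set" where
  "span K B = {lincomb K c B | c. c \<in> B \<rightarrow> carrier K}"

definition lin_indep :: "('a, 'b) ring_scheme \<Rightarrow> (nat \<Rightarrow> 'a) set \<Rightarrow> bool" where
  "lin_indep K B \<longleftrightarrow> finite B \<and>
     (\<forall>c. c \<in> B \<rightarrow> carrier K \<longrightarrow> lincomb K c B = vzero K \<longrightarrow> (\<forall>b\<in>B. c b = \<zero>\<^bsub>K\<^esub>))"

definition is_basis :: "('a, 'b) ring_scheme \<Rightarrow> (nat \<Rightarrow> 'a) set \<Rightarrow> (nat \<Rightarrow> 'a) set \<Rightarrow> bool" where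
  "is_basis K L B \<longleftrightarrow> B \<subseteq> L \<and> lin_indep K B \<and> span K B = L"

definition vdim :: "('a, 'b) ring_scheme \<Rightarrow> (nat \<Rightarrow> 'a) set \<Rightarrow> nat" where
  "vdim K L = (SOME d. \<exists>B. is_basis K L B \<and> card B = d)"

definition perp :: "('a, 'b) ring_scheme \<Rightarrow> nat \<Rightarrow> (nat \<Rightarrow> 'a) set \<Rightarrow> (nat \<Rightarrow> 'a) set" where
  "perp K n L = {w \<in> vecs K n. \<forall>v\<in>L. finsum K (\<lambda>j. v j \<otimes>\<^bsub>K\<^esub> w j) {..<n} = \<zero>\<^bsub>K\<^esub>}"

text \<open>The product lattice P(K^n) = P(K_1^{n_1}) x ... x P(K_l^{n_l}); tuples are
functions on indices i < l (components at i >= l are fixed to be empty).\<close>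

definition PL :: "nat \<Rightarrow> (nat \<Rightarrow> ('a, 'b) ring_scheme) \<Rightarrow> (nat \<Rightarrow> nat) \<Rightarrow> (nat \<Rightarrow> (nat \<Rightarrow> 'a) set) set" where
  "PL l K n = {L. (\<forall>i<l. subspace (K i) (n i) (L i)) \<and> (\<forall>i. l \<le> i \<longrightarrow> L i = {})}"

definition Ptop :: "nat \<Rightarrow> (nat \<Rightarrow> ('a, 'b) ring_scheme) \<Rightarrow> (nat \<Rightarrow> nat) \<Rightarrow> nat \<Rightarrow> (nat \<Rightarrow> 'a) set" where
  "Ptop l K n = (\<lambda>i. if i < l then vecs (K i) (n i) else {})"

definition Psum :: "nat \<Rightarrow> (nat \<Rightarrow> ('a, 'b) ring_scheme) \<Rightarrow> (nat \<Rightarrow> (nat \<Rightarrow> 'a) set) \<Rightarrow> (nat \<Rightarrow> (nat \<Rightarrow> 'a) set) \<Rightarrow> nat \<Rightarrow> (nat \<Rightarrow> 'a) set" where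
  "Psum l K L L' = (\<lambda>i. if i < l then {vadd (K i) v w | v w. v \<in> L i \<and> w \<in> L' i} else {})"

definition Pinter :: "(nat \<Rightarrow> (nat \<Rightarrow> 'a) set) \<Rightarrow> (nat \<Rightarrow> (nat \<Rightarrow> 'a) set) \<Rightarrow> nat \<Rightarrow> (nat \<Rightarrow> 'a) set" where
  "Pinter L L' = (\<lambda>i. L i \<inter> L' i)"

definition Pperp :: "nat \<Rightarrow> (nat \<Rightarrow> ('a, 'b) ring_scheme) \<Rightarrow> (nat \<Rightarrow> nat) \<Rightarrow> (nat \<Rightarrow> (nat \<Rightarrow> 'a) set) \<Rightarrow> nat \<Rightarrow> (nat \<Rightarrow> 'a) set" where
  "Pperp l K n L = (\<lambda>i. if i < l then perp (K i) (n i) (L i) else {})"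

definition Pincl :: "nat \<Rightarrow> (nat \<Rightarrow> (nat \<Rightarrow> 'a) set) \<Rightarrow> (nat \<Rightarrow> (nat \<Rightarrow> 'a) set) \<Rightarrow> bool" where
  "Pincl l L L' \<longleftrightarrow> (\<forall>i<l. L i \<subseteq> L' i)"

definition Rk :: "nat \<Rightarrow> (nat \<Rightarrow> ('a, 'b) ring_scheme) \<Rightarrow> (nat \<Rightarrow> (nat \<Rightarrow> 'a) set) \<Rightarrow> int" where
  "Rk l K L = (\<Sum>i<l. int (vdim (K i) (L i)))"

definition rank_function :: "nat \<Rightarrow> (nat \<Rightarrow> ('a, 'b) ring_scheme) \<Rightarrow> (nat \<Rightarrow> nat) \<Rightarrow> ((nat \<Rightarrow> (nat \<Rightarrow> 'a) set) \<Rightarrow> int) \<Rightarrow> bool" where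
  "rank_function l K n \<rho> \<longleftrightarrow>
     (\<forall>L\<in>PL l K n. 0 \<le> \<rho> L \<and> \<rho> L \<le> Rk l K L) \<and>
     (\<forall>L\<in>PL l K n. \<forall>L'\<in>PL l K n. Pincl l L L' \<longrightarrow> \<rho> L \<le> \<rho> L') \<and>
     (\<forall>L\<in>PL l K n. \<forall>L'\<in>PL l K n.
        \<rho> (Psum l K L L') + \<rho> (Pinter L L') \<le> \<rho> L + \<rho> L')"

definition dual_rank :: "nat \<Rightarrow> (nat \<Rightarrow> ('a, 'b) ring_scheme) \<Rightarrow> (nat \<Rightarrow> nat) \<Rightarrow> ((nat \<Rightarrow> (nat \<Rightarrow> 'a) set) \<Rightarrow> int) \<Rightarrow> (nat \<Rightarrow> (nat \<Rightarrow> 'a) set) \<Rightarrow> int" where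
  "dual_rank l K n \<rho> L = \<rho> (Pperp l K n L) + Rk l K L - \<rho> (Ptop l K n)"

end

theory Submission
  imports Defs
begin


lemma fiber_count:
  assumes "finite A" "g ` A = C" "\<And>c. c \<in> C \<Longrightarrow> card {a\<in>A. g a = c} = k"
  shows "card A = card C * k"
proof -
  have C: "finite C" using assms by auto
  have "A = (\<Union>c\<in>C. {a\<in>A. g a = c})" using assms(2) by auto
  moreover have "card (\<Union>c\<in>C. {a\<in>A. g a = c}) = (\<Sum>c\<in>C. card {a\<in>A. g a = c})"
    by (rule card_UN_disjoint[OF C]) (use assms(1) in auto)
  ultimately have "card A = (\<Sum>c\<in>C. card {a\<in>A. g a = c})" by simp
  also have "\<dots> = card C * k" using assms(3) by simp
  finally show ?thesis .
qed

locale fvs = field K for K :: "('a,'b) ring_scheme" (structure) +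
  fixes n :: nat
  assumes fin: "finite (carrier K)"
begin

abbreviation "q \<equiv> card (carrier K)"
abbreviation "V \<equiv> vecs K n"

lemma vadd_app: "vadd K v w j = v j \<oplus> w j" by (simp add: vadd_def)
lemma vsmult_app: "vsmult K c v j = c \<otimes> v j" by (simp add: vsmult_def)
lemma vzero_app: "vzero K j = \<zero>" by (simp add: vzero_def)

lemma vecs_carr: "v \<in> V \<Longrightarrow> v j \<in> carrier K"
  unfolding vecs_def by (cases "j < n") auto

lemma vecsI: "(\<And>j. j < n \<Longrightarrow> v j \<in> carrier K) \<Longrightarrow> (\<And>j. n \<le> j \<Longrightarrow> v j = \<zero>) \<Longrightarrow> v \<in> V"
  unfolding vecs_def by auto

lemma vecs_carr_sub[simp]: "B \<subseteq> V \<Longrightarrow> x \<in> B \<Longrightarrow> x j \<in> carrier K"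
  using vecs_carr by blast

lemma funcset_carr[simp]: "c \<in> B \<rightarrow> carrier K \<Longrightarrow> x \<in> B \<Longrightarrow> c x \<in> carrier K"
  by blast

lemma vecs_high: "v \<in> V \<Longrightarrow> n \<le> j \<Longrightarrow> v j = \<zero>"
  unfolding vecs_def by auto

lemma vzero_closed[simp]: "vzero K \<in> V"
  by (rule vecsI) (auto simp: vzero_app)

lemma vadd_closed[simp]: "v \<in> V \<Longrightarrow> w \<in> V \<Longrightarrow> vadd K v w \<in> V"
  by (rule vecsI) (auto simp: vadd_app vecs_carr vecs_high)

lemma vsmult_closed[simp]: "c \<in> carrier K \<Longrightarrow> v \<in> V \<Longrightarrow> vsmult K c v \<in> V"
  by (rule vecsI) (auto simp: vsmult_app vecs_carr vecs_high)


lemma q_gt1: "1 < q"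
proof -
  have "{\<zero>, \<one>} \<subseteq> carrier K" by simp
  hence "card {\<zero>, \<one>} \<le> q" using fin card_mono by blast
  thus ?thesis by simp
qed

lemma card_vecs: "card V = q ^ n"
proof -
  let ?e = "\<lambda>f j. if j < n then f j else \<zero>"
  have "V = ?e ` ({..<n} \<rightarrow>\<^sub>E carrier K)"
  proof
    show "V \<subseteq> ?e ` ({..<n} \<rightarrow>\<^sub>E carrier K)"
    proof
      fix v assume v: "v \<in> V"
      have "v = ?e (restrict v {..<n})"
      proof (rule ext)
        fix j show "v j = ?e (restrict v {..<n}) j"
          using vecs_high[OF v, of j] by (cases "j < n") simp_all
      qed
      moreover have "restrict v {..<n} \<in> {..<n} \<rightarrow>\<^sub>E carrier K"
        using vecs_carr[OF v] by (auto simp: PiE_iff)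
      ultimately show "v \<in> ?e ` ({..<n} \<rightarrow>\<^sub>E carrier K)" by (rule image_eqI)
    qed
    show "?e ` ({..<n} \<rightarrow>\<^sub>E carrier K) \<subseteq> V"
    proof
      fix v assume "v \<in> ?e ` ({..<n} \<rightarrow>\<^sub>E carrier K)"
      then obtain f where f: "f \<in> {..<n} \<rightarrow>\<^sub>E carrier K" and v: "v = ?e f" by blast
      show "v \<in> V"
      proof (rule vecsI)
        fix j assume "j < n" thus "v j \<in> carrier K" using f v by (auto simp: PiE_iff)
      next
        fix j assume "n \<le> j" thus "v j = \<zero>" using v by simp
      qed
    qed
  qed
  moreover have "inj_on ?e ({..<n} \<rightarrow>\<^sub>E carrier K)"
  proof (rule inj_onI)
    fix f g assume f: "f \<in> {..<n} \<rightarrow>\<^sub>E carrier K" and g: "g \<in> {..<n} \<rightarrow>\<^sub>E carrier K" and e: "?e f = ?e g"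
    show "f = g"
    proof
      fix j show "f j = g j"
      proof (cases "j < n")
        case True thus ?thesis using fun_cong[OF e, of j] by simp
      next
        case False thus ?thesis using PiE_arb[OF f, of j] PiE_arb[OF g, of j] by simp
      qed
    qed
  qed
  ultimately have "card V = card ({..<n} \<rightarrow>\<^sub>E carrier K)" by (simp add: card_image)
  also have "\<dots> = q ^ n" using fin by (simp add: card_PiE)
  finally show ?thesis .
qed

lemma finite_vecs: "finite V"
  using card_vecs q_gt1 card_eq_0_iff by (metis not_one_less_zero power_eq_0_iff)

lemma subspace_fin: "subspace K n W \<Longrightarrow> finite W"
  unfolding subspace_def using finite_vecs finite_subset by blast

lemmas vapp = vadd_app vsmult_app vzero_app

lemma vadd_zero_right[simp]: "v \<in> V \<Longrightarrow> vadd K v (vzero K) = v"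
  by (auto simp: vecs_carr vapp)
lemma vadd_zero_left[simp]: "v \<in> V \<Longrightarrow> vadd K (vzero K) v = v"
  by (auto simp: vecs_carr vapp)

lemma vadd_comm: "v \<in> V \<Longrightarrow> w \<in> V \<Longrightarrow> vadd K v w = vadd K w v"
  by (auto simp: vecs_carr a_comm vapp)

lemma vadd_assoc: "u \<in> V \<Longrightarrow> v \<in> V \<Longrightarrow> w \<in> V \<Longrightarrow> vadd K (vadd K u v) w = vadd K u (vadd K v w)"
  by (auto simp: vecs_carr a_assoc vapp)

definition vneg where "vneg v = vsmult K (\<ominus> \<one>) v"

lemma vneg_closed[simp]: "v \<in> V \<Longrightarrow> vneg v \<in> V" by (simp add: vneg_def)

lemma vneg_app: "v \<in> V \<Longrightarrow> vneg v j = \<ominus> v j"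
  by (simp add: vneg_def vecs_carr l_minus vapp)

lemma vadd_neg[simp]: "v \<in> V \<Longrightarrow> vadd K v (vneg v) = vzero K"
  by (rule ext) (simp add: vneg_app vecs_carr r_neg vapp)

lemma vneg_add_cancel[simp]: "u \<in> V \<Longrightarrow> v \<in> V \<Longrightarrow> vadd K u (vadd K (vneg u) v) = v"
  by (rule ext) (simp add: vneg_app vecs_carr a_assoc[symmetric] r_neg vapp)

lemma vadd_cancel_left: "u \<in> V \<Longrightarrow> v \<in> V \<Longrightarrow> w \<in> V \<Longrightarrow> vadd K u v = vadd K u w \<Longrightarrow> v = w"
  by (metis vneg_add_cancel vadd_assoc vadd_comm vneg_closed)

lemma subspace_neg: "subspace K n W \<Longrightarrow> v \<in> W \<Longrightarrow> vneg v \<in> W"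
  unfolding subspace_def vneg_def by auto

lemma subspace_vecs: "subspace K n V"
  unfolding subspace_def by auto

end

context fvs begin

lemma lincomb_app: "lincomb K c B j = (\<Oplus>b\<in>B. c b \<otimes> b j)"
  by (simp add: lincomb_def)

lemma lincomb_closed:
  assumes "finite B" "B \<subseteq> V" "c \<in> B \<rightarrow> carrier K"
  shows "lincomb K c B \<in> V"
proof (rule vecsI)
  fix j show "lincomb K c B j \<in> carrier K"
    unfolding lincomb_app using assms by (auto intro!: finsum_closed simp: vecs_carr)
next
  fix j assume j: "n \<le> j"
  show "lincomb K c B j = \<zero>"
    unfolding lincomb_app using assms j
    by (intro add.finprod_one_eqI) (auto simp: vecs_high)
qed

lemma lincomb_empty[simp]: "lincomb K c {} = vzero K"
  by (rule ext) (simp add: lincomb_app vapp)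

lemma lincomb_insert:
  assumes "finite B" "b \<notin> B" "insert b B \<subseteq> V" "c \<in> insert b B \<rightarrow> carrier K"
  shows "lincomb K c (insert b B) = vadd K (vsmult K (c b) b) (lincomb K c B)"
proof (rule ext)
  fix j
  show "lincomb K c (insert b B) j = vadd K (vsmult K (c b) b) (lincomb K c B) j"
    unfolding lincomb_app vadd_app vsmult_app using assms
    by (subst finsum_insert) (auto simp: vecs_carr)
qed

lemma lincomb_cong: "B \<subseteq> V \<Longrightarrow> d \<in> B \<rightarrow> carrier K \<Longrightarrow> (\<And>b. b \<in> B \<Longrightarrow> c b = d b) \<Longrightarrow> lincomb K c B = lincomb K d B"
  unfolding lincomb_def by (intro ext add.finprod_cong') auto

lemma lincomb_in_subspace:
  assumes W: "subspace K n W" and "finite B" "B \<subseteq> W" "c \<in> B \<rightarrow> carrier K"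
  shows "lincomb K c B \<in> W"
  using assms(2-4)
proof (induction B rule: finite_induct)
  case empty
  have "lincomb K c {} = vzero K" by (rule lincomb_empty)
  then show ?case using W by (simp add: subspace_def)
next
  case (insert b B)
  have WV: "W \<subseteq> V" using W by (simp add: subspace_def)
  have "lincomb K c (insert b B) = vadd K (vsmult K (c b) b) (lincomb K c B)"
    using insert WV by (intro lincomb_insert) auto
  moreover have "lincomb K c B \<in> W" using insert by auto
  moreover have "vsmult K (c b) b \<in> W" using insert W by (auto simp: subspace_def)
  ultimately show ?case using W by (simp add: subspace_def)
qed

lemma lincomb_add:
  assumes "finite B" "B \<subseteq> V" "c \<in> B \<rightarrow> carrier K" "d \<in> B \<rightarrow> carrier K"
  shows "lincomb K (\<lambda>b. c b \<oplus> d b) B = vadd K (lincomb K c B) (lincomb K d B)"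
proof (rule ext)
  fix j
  have "(\<Oplus>b\<in>B. (c b \<oplus> d b) \<otimes> b j) = (\<Oplus>b\<in>B. c b \<otimes> b j \<oplus> d b \<otimes> b j)"
    using assms by (intro add.finprod_cong') (auto simp: l_distr)
  also have "\<dots> = (\<Oplus>b\<in>B. c b \<otimes> b j) \<oplus> (\<Oplus>b\<in>B. d b \<otimes> b j)"
    using assms by (intro finsum_addf) (auto simp: vecs_carr)
  finally show "lincomb K (\<lambda>b. c b \<oplus> d b) B j = vadd K (lincomb K c B) (lincomb K d B) j"
    by (simp add: lincomb_app vapp)
qed

lemma lincomb_smult:
  assumes "finite B" "B \<subseteq> V" "c \<in> B \<rightarrow> carrier K" "a \<in> carrier K"
  shows "lincomb K (\<lambda>b. a \<otimes> c b) B = vsmult K a (lincomb K c B)"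
proof (rule ext)
  fix j
  have "(\<Oplus>b\<in>B. (a \<otimes> c b) \<otimes> b j) = (\<Oplus>b\<in>B. a \<otimes> (c b \<otimes> b j))"
    using assms by (intro add.finprod_cong') (auto simp: m_assoc vecs_carr)
  also have "\<dots> = a \<otimes> (\<Oplus>b\<in>B. c b \<otimes> b j)"
    using assms by (intro finsum_rdistr[symmetric]) (auto simp: vecs_carr)
  finally show "lincomb K (\<lambda>b. a \<otimes> c b) B j = vsmult K a (lincomb K c B) j"
    by (simp add: lincomb_app vapp)
qed

lemma span_subspace:
  assumes "finite B" "B \<subseteq> V"
  shows "subspace K n (span K B)"
  unfolding subspace_def
proof (intro conjI ballI)
  show "span K B \<subseteq> V" using assms lincomb_closed by (auto simp: span_def)
  have "lincomb K (\<lambda>b. \<zero>) B = vzero K"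
    using assms by (intro ext) (auto simp: lincomb_app vapp intro!: add.finprod_one_eqI)
  thus "vzero K \<in> span K B" unfolding span_def by force
next
  fix v w assume "v \<in> span K B" "w \<in> span K B"
  then obtain c d where "c \<in> B \<rightarrow> carrier K" "d \<in> B \<rightarrow> carrier K" "v = lincomb K c B" "w = lincomb K d B"
    by (auto simp: span_def)
  thus "vadd K v w \<in> span K B" using lincomb_add[OF assms] unfolding span_def
    by (intro CollectI exI[of _ "\<lambda>b. c b \<oplus> d b"]) auto
next
  fix a v assume "a \<in> carrier K" "v \<in> span K B"
  then obtain c where "c \<in> B \<rightarrow> carrier K" "v = lincomb K c B"
    by (auto simp: span_def)
  thus "vsmult K a v \<in> span K B" using lincomb_smult[OF assms] \<open>a \<in> carrier K\<close> unfolding span_def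
    by (intro CollectI exI[of _ "\<lambda>b. a \<otimes> c b"]) auto
qed

lemma span_sub: "subspace K n W \<Longrightarrow> finite B \<Longrightarrow> B \<subseteq> W \<Longrightarrow> span K B \<subseteq> W"
  using lincomb_in_subspace by (auto simp: span_def)

lemma in_span:
  assumes "finite B" "B \<subseteq> V" "x \<in> B"
  shows "x \<in> span K B"
proof -
  have "lincomb K (\<lambda>b. if b = x then \<one> else \<zero>) B = x"
  proof (rule ext)
    fix j
    have "(\<Oplus>b\<in>B. (if b = x then \<one> else \<zero>) \<otimes> b j) = (\<Oplus>b\<in>B. if x = b then x j else \<zero>)"
      using assms by (intro add.finprod_cong') (auto simp: vecs_carr)
    also have "\<dots> = x j" using assms by (intro add.finprod_singleton) (auto simp: vecs_carr)
    finally show "lincomb K (\<lambda>b. if b = x then \<one> else \<zero>) B j = x j" by (simp add: lincomb_app vapp)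
  qed
  thus ?thesis unfolding span_def by (intro CollectI exI[of _ "\<lambda>b. if b = x then \<one> else \<zero>"]) auto
qed

end

context fvs begin

lemma inv_facts:
  assumes "a \<in> carrier K" "a \<noteq> \<zero>"
  shows "inv a \<in> carrier K" "inv a \<otimes> a = \<one>" "a \<otimes> inv a = \<one>"
  using assms field_Units by auto

lemma indep_insert:
  assumes li: "lin_indep K B" and BV: "B \<subseteq> V" and xV: "x \<in> V" and nx: "x \<notin> span K B"
  shows "lin_indep K (insert x B)"
proof -
  have fB: "finite B" using li by (simp add: lin_indep_def)
  have xB: "x \<notin> B" using in_span[OF fB BV] nx by blast
  show ?thesis unfolding lin_indep_def
  proof (intro conjI allI impI)
    show "finite (insert x B)" using fB by simp
    fix c assume c: "c \<in> insert x B \<rightarrow> carrier K" and lc: "lincomb K c (insert x B) = vzero K"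
    have cB: "c \<in> B \<rightarrow> carrier K" using c by auto
    have cx: "c x \<in> carrier K" using c by auto
    let ?w = "lincomb K c B"
    have wV: "?w \<in> V" using lincomb_closed[OF fB BV cB] .
    have eq: "vadd K (vsmult K (c x) x) ?w = vzero K"
      using lc lincomb_insert[OF fB xB _ c] BV xV by simp
    have c0: "c x = \<zero>"
    proof (rule ccontr)
      assume ne: "c x \<noteq> \<zero>"
      let ?a = "inv (c x)"
      have a: "?a \<in> carrier K" "?a \<otimes> c x = \<one>" using inv_facts[OF cx ne] by auto
      have "x = vsmult K (\<ominus> ?a) ?w"
      proof (rule ext)
        fix j
        have xj: "x j \<in> carrier K" and wj: "?w j \<in> carrier K" using xV wV vecs_carr by auto
        have e: "c x \<otimes> x j \<oplus> ?w j = \<zero>" using fun_cong[OF eq, of j] by (simp add: vapp)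
        hence "c x \<otimes> x j = \<ominus> ?w j" using xj wj cx by (metis m_closed minus_equality)
        hence "?a \<otimes> (c x \<otimes> x j) = ?a \<otimes> (\<ominus> ?w j)" by simp
        moreover have "?a \<otimes> (c x \<otimes> x j) = x j" using a xj cx by (simp add: m_assoc[symmetric])
        moreover have "?a \<otimes> (\<ominus> ?w j) = \<ominus> ?a \<otimes> ?w j" using a wj by (simp add: l_minus r_minus)
        ultimately show "x j = vsmult K (\<ominus> ?a) ?w j" by (simp add: vapp)
      qed
      also have "\<dots> = lincomb K (\<lambda>b. \<ominus> ?a \<otimes> c b) B"
        using lincomb_smult[OF fB BV cB, of "\<ominus> ?a"] a by simp
      also have "\<dots> \<in> span K B" unfolding span_def using a cB
        by (intro CollectI exI[of _ "\<lambda>b. \<ominus> ?a \<otimes> c b"]) auto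
      finally show False using nx by simp
    qed
    have "vsmult K (c x) x = vzero K" using c0 xV by (intro ext) (simp add: vapp vecs_carr)
    hence w0: "?w = vzero K" using eq wV by simp
    have "\<forall>b\<in>B. c b = \<zero>" using li cB w0 by (simp add: lin_indep_def)
    thus "\<forall>b\<in>insert x B. c b = \<zero>" using c0 by simp
  qed
qed

lemma span_eq_image:
  assumes "finite B" "B \<subseteq> V"
  shows "span K B = (\<lambda>c. lincomb K c B) ` (B \<rightarrow>\<^sub>E carrier K)"
proof
  show "span K B \<subseteq> (\<lambda>c. lincomb K c B) ` (B \<rightarrow>\<^sub>E carrier K)"
  proof
    fix v assume "v \<in> span K B"
    then obtain c where c: "c \<in> B \<rightarrow> carrier K" "v = lincomb K c B" by (auto simp: span_def)
    have "lincomb K c B = lincomb K (restrict c B) B"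
      using c assms by (intro lincomb_cong) auto
    moreover have "restrict c B \<in> B \<rightarrow>\<^sub>E carrier K" using c by auto
    ultimately show "v \<in> (\<lambda>c. lincomb K c B) ` (B \<rightarrow>\<^sub>E carrier K)" using c by auto
  qed
qed (auto simp: span_def PiE_def)

lemma card_span:
  assumes li: "lin_indep K B" and BV: "B \<subseteq> V"
  shows "card (span K B) = q ^ card B"
proof -
  have fB: "finite B" using li by (simp add: lin_indep_def)
  have "inj_on (\<lambda>c. lincomb K c B) (B \<rightarrow>\<^sub>E carrier K)"
  proof (rule inj_onI)
    fix c d assume c: "c \<in> B \<rightarrow>\<^sub>E carrier K" and d: "d \<in> B \<rightarrow>\<^sub>E carrier K"
      and e: "lincomb K c B = lincomb K d B"
    let ?e = "\<lambda>b. c b \<oplus> \<ominus> d b"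
    have eP: "?e \<in> B \<rightarrow> carrier K" using c d by auto
    have dP: "d \<in> B \<rightarrow> carrier K" using d by auto
    have "lincomb K (\<lambda>b. ?e b \<oplus> d b) B = lincomb K c B"
      using c d BV by (intro lincomb_cong) (auto simp: a_assoc l_neg PiE_iff)
    hence "vadd K (lincomb K ?e B) (lincomb K d B) = lincomb K d B"
      using lincomb_add[OF fB BV eP dP] e by simp
    hence "vadd K (lincomb K ?e B) (lincomb K d B) = vadd K (vzero K) (lincomb K d B)"
      using lincomb_closed[OF fB BV dP] by simp
    hence "lincomb K ?e B = vzero K"
      using lincomb_closed[OF fB BV dP] lincomb_closed[OF fB BV eP]
      by (metis vadd_cancel_left vadd_comm vzero_closed)
    hence z: "\<forall>b\<in>B. ?e b = \<zero>" using li eP by (simp add: lin_indep_def)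
    show "c = d"
    proof
      fix b show "c b = d b"
      proof (cases "b \<in> B")
        case True
        hence "c b \<oplus> \<ominus> d b = \<zero>" using z by auto
        thus ?thesis using c d True by (metis PiE_mem add.inv_closed minus_equality minus_minus)
      next
        case False thus ?thesis using c d by (auto simp: PiE_def extensional_def)
      qed
    qed
  qed
  hence "card (span K B) = card (B \<rightarrow>\<^sub>E carrier K)"
    using span_eq_image[OF fB BV] by (simp add: card_image)
  also have "\<dots> = q ^ card B" using fB by (simp add: card_PiE)
  finally show ?thesis .
qed

lemma basis_exists:
  assumes W: "subspace K n W"
  shows "\<exists>B. is_basis K W B"
proof -
  have fW: "finite W" using subspace_fin[OF W] .
  have WV: "W \<subseteq> V" using W by (simp add: subspace_def)
  let ?P = "\<lambda>k. \<exists>B. B \<subseteq> W \<and> lin_indep K B \<and> card B = k"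
  have P0: "?P 0" by (intro exI[of _ "{}"]) (simp add: lin_indep_def)
  have bound: "\<forall>k. ?P k \<longrightarrow> k \<le> card W"
  proof (intro allI impI)
    fix k assume "?P k"
    then obtain B where "B \<subseteq> W" "card B = k" by blast
    thus "k \<le> card W" using fW card_mono by metis
  qed
  obtain k where Pk: "?P k" and kmax: "\<forall>k'. ?P k' \<longrightarrow> k' \<le> k"
    using Nat.ex_has_greatest_nat[where P="?P" and k=0 and b="card W", OF P0 bound] by blast
  then obtain B where B: "B \<subseteq> W" "lin_indep K B" "card B = k" by blast
  have fB: "finite B" using B by (simp add: lin_indep_def)
  have "span K B = W"
  proof
    show "span K B \<subseteq> W" using span_sub[OF W fB B(1)] .
    show "W \<subseteq> span K B"
    proof
      fix x assume x: "x \<in> W"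
      show "x \<in> span K B"
      proof (rule ccontr)
        assume nx: "x \<notin> span K B"
        have xV: "x \<in> V" using WV x by (rule subsetD)
        have BV: "B \<subseteq> V" using B(1) WV by (rule order_trans)
        have li2: "lin_indep K (insert x B)" by (rule indep_insert[OF B(2) BV xV nx])
        have "x \<notin> B" using in_span[OF fB BV] nx by blast
        hence "card (insert x B) = Suc k" using fB B(3) by simp
        moreover have "insert x B \<subseteq> W" using x B(1) by (rule insert_subsetI)
        ultimately have "?P (Suc k)" using li2 by blast
        hence "Suc k \<le> k" using kmax by blast
        thus False by simp
      qed
    qed
  qed
  thus ?thesis using B unfolding is_basis_def by blast
qed

lemma card_dim:
  assumes W: "subspace K n W"
  shows "card W = q ^ vdim K W"
proof -
  have WV: "W \<subseteq> V" using W by (simp add: subspace_def)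
  have ex: "\<exists>d B. is_basis K W B \<and> card B = d" using basis_exists[OF W] by blast
  have "\<exists>B. is_basis K W B \<and> card B = vdim K W"
    unfolding vdim_def by (rule someI_ex[OF ex])
  then obtain B where B: "is_basis K W B" "card B = vdim K W" by blast
  have "card W = card (span K B)" using B by (simp add: is_basis_def)
  also have "\<dots> = q ^ card B" using B WV by (intro card_span) (auto simp: is_basis_def)
  finally show ?thesis using B by simp
qed

lemma dim_unique:
  assumes W: "subspace K n W" and c: "card W = q ^ d"
  shows "vdim K W = d"
  using card_dim[OF W] c q_gt1 by (metis power_inject_exp)

lemma dim_le: "subspace K n W \<Longrightarrow> subspace K n U \<Longrightarrow> W \<subseteq> U \<Longrightarrow> vdim K W \<le> vdim K U"
  using card_dim card_mono subspace_fin q_gt1 by (metis power_le_imp_le_exp)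

lemma dim_eq_imp_eq: "subspace K n W \<Longrightarrow> subspace K n U \<Longrightarrow> W \<subseteq> U \<Longrightarrow> vdim K W = vdim K U \<Longrightarrow> W = U"
  using card_dim subspace_fin by (metis card_subset_eq)

lemma dim_vecs: "vdim K V = n"
  using dim_unique[OF subspace_vecs card_vecs] .

lemma subspace_zero: "subspace K n {vzero K}"
  unfolding subspace_def by (auto simp: vapp)

lemma dim_zero: "vdim K {vzero K} = 0"
  using dim_unique[OF subspace_zero] by simp

end

context fvs begin

definition ip where "ip v w = (\<Oplus>j\<in>{..<n}. v j \<otimes> w j)"

lemma perp_ip: "perp K n X = {w \<in> V. \<forall>v\<in>X. ip v w = \<zero>}"
  by (simp add: perp_def ip_def)

lemma ip_closed[simp]: "v \<in> V \<Longrightarrow> w \<in> V \<Longrightarrow> ip v w \<in> carrier K"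
  unfolding ip_def by (auto intro!: finsum_closed simp: vecs_carr)

lemma ip_add_l: "x \<in> V \<Longrightarrow> y \<in> V \<Longrightarrow> w \<in> V \<Longrightarrow> ip (vadd K x y) w = ip x w \<oplus> ip y w"
  unfolding ip_def vadd_app
  by (subst finsum_addf[symmetric]) (auto intro!: add.finprod_cong' simp: vecs_carr l_distr)

lemma ip_smult_l: "c \<in> carrier K \<Longrightarrow> x \<in> V \<Longrightarrow> w \<in> V \<Longrightarrow> ip (vsmult K c x) w = c \<otimes> ip x w"
  unfolding ip_def vsmult_app
  by (subst finsum_rdistr) (auto intro!: add.finprod_cong' simp: vecs_carr m_assoc)

lemma ip_comm: "v \<in> V \<Longrightarrow> w \<in> V \<Longrightarrow> ip v w = ip w v"
  unfolding ip_def by (auto intro!: add.finprod_cong' simp: vecs_carr m_comm)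

lemma ip_add_r: "x \<in> V \<Longrightarrow> y \<in> V \<Longrightarrow> w \<in> V \<Longrightarrow> ip w (vadd K x y) = ip w x \<oplus> ip w y"
  using ip_comm[of w "vadd K x y"] ip_comm[of w x] ip_comm[of w y] ip_add_l[of x y w] by simp

lemma ip_smult_r: "c \<in> carrier K \<Longrightarrow> x \<in> V \<Longrightarrow> w \<in> V \<Longrightarrow> ip w (vsmult K c x) = c \<otimes> ip w x"
  using ip_comm[of w "vsmult K c x"] ip_comm[of w x] ip_smult_l[of c x w] by simp

lemma ip_zero_l[simp]: "w \<in> V \<Longrightarrow> ip (vzero K) w = \<zero>"
  unfolding ip_def vzero_app by (auto intro!: add.finprod_one_eqI simp: vecs_carr)

lemma unitv:
  assumes "j < n"
  shows "(\<lambda>k. if k = j then \<one> else \<zero>) \<in> V" "x \<in> V \<Longrightarrow> ip x (\<lambda>k. if k = j then \<one> else \<zero>) = x j"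
proof -
  show "(\<lambda>k. if k = j then \<one> else \<zero>) \<in> V" using assms by (intro vecsI) auto
  assume x: "x \<in> V"
  have "ip x (\<lambda>k. if k = j then \<one> else \<zero>) = (\<Oplus>k\<in>{..<n}. if j = k then x k else \<zero>)"
    unfolding ip_def using x by (intro add.finprod_cong') (auto simp: vecs_carr)
  also have "\<dots> = x j" using assms x by (intro add.finprod_singleton) (auto simp: vecs_carr)
  finally show "ip x (\<lambda>k. if k = j then \<one> else \<zero>) = x j" .
qed

lemma nonzero_coord:
  assumes x: "x \<in> V" and nz: "x \<noteq> vzero K"
  shows "\<exists>j<n. x j \<noteq> \<zero>"
proof (rule ccontr)
  assume a: "\<not> (\<exists>j<n. x j \<noteq> \<zero>)"
  have "x = vzero K"
  proof (rule ext)
    fix j show "x j = vzero K j"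
    proof (cases "j < n")
      case True thus ?thesis using a by (simp add: vzero_app)
    next
      case False thus ?thesis using vecs_high[OF x, of j] by (simp add: vzero_app)
    qed
  qed
  thus False using nz by simp
qed

lemma functional_card:
  assumes W: "subspace K n W"
    and f: "\<And>v. v \<in> W \<Longrightarrow> f v \<in> carrier K"
    and fadd: "\<And>v w. v \<in> W \<Longrightarrow> w \<in> W \<Longrightarrow> f (vadd K v w) = f v \<oplus> f w"
    and fsm: "\<And>c v. c \<in> carrier K \<Longrightarrow> v \<in> W \<Longrightarrow> f (vsmult K c v) = c \<otimes> f v"
    and v0: "v0 \<in> W" "f v0 \<noteq> \<zero>"
  shows "card W = q * card {v\<in>W. f v = \<zero>}"
proof -
  have fW: "finite W" using subspace_fin[OF W] .
  have WV: "W \<subseteq> V" using W by (simp add: subspace_def)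
  have Wadd: "\<And>v w. v \<in> W \<Longrightarrow> w \<in> W \<Longrightarrow> vadd K v w \<in> W" using W by (simp add: subspace_def)
  have Wsm: "\<And>c v. c \<in> carrier K \<Longrightarrow> v \<in> W \<Longrightarrow> vsmult K c v \<in> W" using W by (simp add: subspace_def)
  define a where "a = f v0"
  have a: "a \<in> carrier K" "a \<noteq> \<zero>" using f v0 by (auto simp: a_def)
  have ia: "inv a \<in> carrier K" "inv a \<otimes> a = \<one>" using inv_facts[OF a] by auto
  define u where "u c = vsmult K (c \<otimes> inv a) v0" for c
  have uW: "u c \<in> W" if c: "c \<in> carrier K" for c
    unfolding u_def using Wsm ia(1) v0(1) c by simp
  have fu: "f (u c) = c" if c: "c \<in> carrier K" for c
  proof -
    have "f (u c) = (c \<otimes> inv a) \<otimes> f v0" unfolding u_def using ia(1) v0(1) c by (intro fsm) auto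
    hence "f (u c) = (c \<otimes> inv a) \<otimes> a" by (simp add: a_def)
    also have "(c \<otimes> inv a) \<otimes> a = c \<otimes> (inv a \<otimes> a)" using ia(1) a(1) c by (simp add: m_assoc)
    also have "\<dots> = c" using ia(2) c by simp
    finally show ?thesis .
  qed
  have img: "f ` W = carrier K"
  proof
    show "f ` W \<subseteq> carrier K" using f by blast
    show "carrier K \<subseteq> f ` W"
    proof
      fix c assume c: "c \<in> carrier K"
      have "f (u c) = c" using fu[OF c] .
      thus "c \<in> f ` W" using uW[OF c] by (metis image_eqI)
    qed
  qed
  have fib: "card {v\<in>W. f v = c} = card {v\<in>W. f v = \<zero>}" if c: "c \<in> carrier K" for c
  proof -
    have ucW: "u c \<in> W" using uW[OF c] .
    have ucV: "u c \<in> V" using ucW WV by blast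
    have "{v\<in>W. f v = c} = vadd K (u c) ` {v\<in>W. f v = \<zero>}"
    proof
      show "{v\<in>W. f v = c} \<subseteq> vadd K (u c) ` {v\<in>W. f v = \<zero>}"
      proof
        fix v assume v: "v \<in> {v\<in>W. f v = c}"
        hence vW: "v \<in> W" and fv: "f v = c" by auto
        have vV: "v \<in> V" using vW WV by blast
        define v' where "v' = vadd K (vneg (u c)) v"
        have nW: "vneg (u c) \<in> W" using subspace_neg[OF W ucW] .
        have fn: "f (vneg (u c)) = \<ominus> c"
        proof -
          have "f (vneg (u c)) = \<ominus> \<one> \<otimes> f (u c)" unfolding vneg_def using fsm ucW by simp
          also have "\<dots> = \<ominus> c" using fu[OF c] c by (simp add: l_minus)
          finally show ?thesis .
        qed
        have "f v' = \<ominus> c \<oplus> c" unfolding v'_def using fadd[OF nW vW] fn fv by simp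
        hence f0: "f v' = \<zero>" using c by (simp add: l_neg)
        have v'W: "v' \<in> W" unfolding v'_def using Wadd[OF nW vW] .
        have "vadd K (u c) v' = v" unfolding v'_def using vneg_add_cancel[OF ucV vV] .
        hence "v = vadd K (u c) v'" by simp
        moreover have "v' \<in> {v\<in>W. f v = \<zero>}" using v'W f0 by simp
        ultimately show "v \<in> vadd K (u c) ` {v\<in>W. f v = \<zero>}" by (rule image_eqI)
      qed
      show "vadd K (u c) ` {v\<in>W. f v = \<zero>} \<subseteq> {v\<in>W. f v = c}"
      proof
        fix x assume "x \<in> vadd K (u c) ` {v\<in>W. f v = \<zero>}"
        then obtain v where v: "v \<in> W" "f v = \<zero>" and x: "x = vadd K (u c) v" by blast
        have "f x = c \<oplus> \<zero>" using x fadd[OF ucW v(1)] fu[OF c] v(2) by simp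
        hence "f x = c" using c by simp
        moreover have "x \<in> W" using x Wadd[OF ucW v(1)] by simp
        ultimately show "x \<in> {v\<in>W. f v = c}" by simp
      qed
    qed
    moreover have "inj_on (vadd K (u c)) {v\<in>W. f v = \<zero>}"
    proof (rule inj_onI)
      fix x y assume x: "x \<in> {v\<in>W. f v = \<zero>}" and y: "y \<in> {v\<in>W. f v = \<zero>}"
        and e: "vadd K (u c) x = vadd K (u c) y"
      have "x \<in> V" "y \<in> V" using x y WV by blast+
      thus "x = y" using vadd_cancel_left[OF ucV _ _ e] by simp
    qed
    ultimately show ?thesis by (simp add: card_image)
  qed
  have "card W = card (carrier K) * card {v\<in>W. f v = \<zero>}"
  proof (rule fiber_count[OF fW img])
    fix c assume "c \<in> carrier K" thus "card {v\<in>W. f v = c} = card {v\<in>W. f v = \<zero>}" by (rule fib)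
  qed
  thus ?thesis by simp
qed

end

context fvs begin

lemma card_filter_sum: "finite A \<Longrightarrow> card {x\<in>A. P x} = (\<Sum>x\<in>A. if P x then 1 else 0)"
  by (simp add: sum.If_cases Int_def conj_commute)

lemma sum_split_point:
  assumes "finite A" "a \<in> A"
  shows "(\<Sum>x\<in>A. if x = a then s else t) = s + (card A - 1) * (t::nat)"
proof -
  have "(\<Sum>x\<in>A. if x = a then s else t) = s + (\<Sum>x\<in>A - {a}. if x = a then s else t)"
    using assms by (simp add: sum.remove)
  also have "(\<Sum>x\<in>A - {a}. if x = a then s else t) = (\<Sum>x\<in>A - {a}. t)" by (intro sum.cong) auto
  also have "\<dots> = (card A - 1) * t" using assms by simp
  finally show ?thesis .
qed

lemma subspace_perp:
  assumes XV: "X \<subseteq> V"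
  shows "subspace K n (perp K n X)"
  unfolding subspace_def
proof (intro conjI ballI)
  show "perp K n X \<subseteq> V" by (auto simp: perp_ip)
  have "\<And>v. v \<in> X \<Longrightarrow> ip v (vzero K) = \<zero>" using XV ip_comm ip_zero_l by (metis subsetD vzero_closed)
  thus "vzero K \<in> perp K n X" by (simp add: perp_ip)
next
  fix v w assume v: "v \<in> perp K n X" and w: "w \<in> perp K n X"
  have "\<And>x. x \<in> X \<Longrightarrow> ip x (vadd K v w) = \<zero>"
  proof -
    fix x assume x: "x \<in> X"
    have "ip x (vadd K v w) = ip x v \<oplus> ip x w" using v w x XV by (intro ip_add_r) (auto simp: perp_ip)
    thus "ip x (vadd K v w) = \<zero>" using v w x by (simp add: perp_ip)
  qed
  thus "vadd K v w \<in> perp K n X" using v w by (simp add: perp_ip)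
next
  fix c v assume c: "c \<in> carrier K" and v: "v \<in> perp K n X"
  have "\<And>x. x \<in> X \<Longrightarrow> ip x (vsmult K c v) = \<zero>"
  proof -
    fix x assume x: "x \<in> X"
    have "ip x (vsmult K c v) = c \<otimes> ip x v" using c v x XV by (intro ip_smult_r) (auto simp: perp_ip)
    thus "ip x (vsmult K c v) = \<zero>" using v x c by (simp add: perp_ip)
  qed
  thus "vsmult K c v \<in> perp K n X" using c v by (simp add: perp_ip)
qed

lemma card_perp:
  assumes X: "subspace K n X"
  shows "card (perp K n X) * card X = q ^ n"
proof -
  let ?P = "perp K n X"
  have fX: "finite X" using subspace_fin[OF X] .
  have XV: "X \<subseteq> V" using X by (simp add: subspace_def)
  have X0: "vzero K \<in> X" using X by (simp add: subspace_def)
  have PV: "?P \<subseteq> V" by (auto simp: perp_ip)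
  have fP: "finite ?P" using PV finite_vecs finite_subset by blast
  have "(\<Sum>x\<in>X. card {w\<in>V. ip x w = \<zero>}) = (\<Sum>x\<in>X. \<Sum>w\<in>V. if ip x w = \<zero> then 1 else 0)"
    using finite_vecs by (simp add: card_filter_sum)
  also have "\<dots> = (\<Sum>w\<in>V. \<Sum>x\<in>X. if ip x w = \<zero> then 1 else 0)" by (rule sum.swap)
  also have "\<dots> = (\<Sum>w\<in>V. card {x\<in>X. ip x w = \<zero>})"
    using fX by (simp add: card_filter_sum)
  finally have dc: "(\<Sum>x\<in>X. card {w\<in>V. ip x w = \<zero>}) = (\<Sum>w\<in>V. card {x\<in>X. ip x w = \<zero>})" .
  have L: "q * card {w\<in>V. ip x w = \<zero>} = (if x = vzero K then q * q ^ n else q ^ n)" if x: "x \<in> X" for x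
  proof (cases "x = vzero K")
    case True
    have "{w\<in>V. ip x w = \<zero>} = V" using True by auto
    thus ?thesis using card_vecs True by simp
  next
    case False
    have xV: "x \<in> V" using x XV by auto
    obtain j where j: "j < n" "x j \<noteq> \<zero>" using nonzero_coord[OF xV False] by blast
    have "card V = q * card {w\<in>V. ip x w = \<zero>}"
      by (rule functional_card[OF subspace_vecs, of "ip x" "\<lambda>k. if k = j then \<one> else \<zero>"])
         (use xV unitv[OF j(1)] j in \<open>auto simp: ip_add_r ip_smult_r\<close>)
    thus ?thesis using False card_vecs by simp
  qed
  have R: "q * card {x\<in>X. ip x w = \<zero>} = (if w \<in> ?P then q * card X else card X)" if w: "w \<in> V" for w
  proof (cases "w \<in> ?P")
    case True
    hence "{x\<in>X. ip x w = \<zero>} = X" by (auto simp: perp_ip)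
    thus ?thesis using True by simp
  next
    case False
    then obtain x0 where x0: "x0 \<in> X" "ip x0 w \<noteq> \<zero>" using w by (auto simp: perp_ip)
    have "card X = q * card {x\<in>X. ip x w = \<zero>}"
      by (rule functional_card[OF X, of "\<lambda>x. ip x w" x0])
         (use w XV x0 in \<open>auto intro!: ip_add_l ip_smult_l\<close>)
    thus ?thesis using False by simp
  qed
  have "q * (\<Sum>x\<in>X. card {w\<in>V. ip x w = \<zero>}) = (\<Sum>x\<in>X. if x = vzero K then q * q ^ n else q ^ n)"
    by (simp add: sum_distrib_left L)
  also have "\<dots> = q * q ^ n + (card X - 1) * q ^ n" using sum_split_point[OF fX X0] .
  finally have e1: "q * (\<Sum>x\<in>X. card {w\<in>V. ip x w = \<zero>}) = q * q ^ n + (card X - 1) * q ^ n" .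
  have "q * (\<Sum>w\<in>V. card {x\<in>X. ip x w = \<zero>}) = (\<Sum>w\<in>V. if w \<in> ?P then q * card X else card X)"
    by (simp add: sum_distrib_left R)
  also have "\<dots> = (\<Sum>w\<in>V \<inter> {w. w \<in> ?P}. q * card X) + (\<Sum>w\<in>V \<inter> - {w. w \<in> ?P}. card X)"
    using finite_vecs by (rule sum.If_cases)
  also have "V \<inter> {w. w \<in> ?P} = ?P" using PV by auto
  also have "V \<inter> - {w. w \<in> ?P} = V - ?P" by auto
  finally have e2': "q * (\<Sum>w\<in>V. card {x\<in>X. ip x w = \<zero>}) = (\<Sum>w\<in>?P. q * card X) + (\<Sum>w\<in>V - ?P. card X)" .
  have cd: "card (V - ?P) = q ^ n - card ?P" using PV fP card_vecs by (simp add: card_Diff_subset)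
  have e2: "q * (\<Sum>w\<in>V. card {x\<in>X. ip x w = \<zero>}) = card ?P * (q * card X) + (q ^ n - card ?P) * card X"
    using e2' cd by simp
  have cX: "1 \<le> card X" using X0 fX by (metis One_nat_def Suc_leI card_gt_0_iff empty_iff)
  have cP: "card ?P \<le> q ^ n" using PV card_mono finite_vecs card_vecs by metis
  have E: "q * q ^ n + (card X - 1) * q ^ n = card ?P * (q * card X) + (q ^ n - card ?P) * card X"
    using e1 e2 dc by simp
  define Q where "Q = q ^ n"
  have Ei: "int q * int Q + (int (card X) - 1) * int Q = int (card ?P) * (int q * int (card X)) + (int Q - int (card ?P)) * int (card X)"
    using arg_cong[OF E, of int] cX cP unfolding Q_def by (simp add: of_nat_diff)
  hence "(int q - 1) * (int Q - int (card ?P) * int (card X)) = 0"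
    by (simp add: algebra_simps)
  hence "int Q = int (card ?P) * int (card X)" using q_gt1 by simp
  thus ?thesis unfolding Q_def by (metis of_nat_eq_iff of_nat_mult)
qed

lemma dim_perp: "subspace K n X \<Longrightarrow> vdim K (perp K n X) + vdim K X = n"
  using card_perp[of X] card_dim[of X] card_dim[OF subspace_perp, of X] q_gt1 subspace_def
  by (metis power_add power_inject_exp)

end

context fvs begin

definition vsum where "vsum X Y = {vadd K v w | v w. v \<in> X \<and> w \<in> Y}"

lemma subspace_inter: "subspace K n X \<Longrightarrow> subspace K n Y \<Longrightarrow> subspace K n (X \<inter> Y)"
  unfolding subspace_def by auto

lemma vadd_swap: "a \<in> V \<Longrightarrow> b \<in> V \<Longrightarrow> c \<in> V \<Longrightarrow> d \<in> V \<Longrightarrow>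
  vadd K (vadd K a b) (vadd K c d) = vadd K (vadd K a c) (vadd K b d)"
proof (rule ext)
  fix j
  assume V4: "a \<in> V" "b \<in> V" "c \<in> V" "d \<in> V"
  have "a j \<in> carrier K" "b j \<in> carrier K" "c j \<in> carrier K" "d j \<in> carrier K"
    using V4 vecs_carr by auto
  thus "vadd K (vadd K a b) (vadd K c d) j = vadd K (vadd K a c) (vadd K b d) j"
    by (simp add: vapp a_ac)
qed

lemma vsmult_vadd: "c \<in> carrier K \<Longrightarrow> a \<in> V \<Longrightarrow> b \<in> V \<Longrightarrow>
  vsmult K c (vadd K a b) = vadd K (vsmult K c a) (vsmult K c b)"
proof (rule ext)
  fix j assume c: "c \<in> carrier K" and ab: "a \<in> V" "b \<in> V"
  have "a j \<in> carrier K" "b j \<in> carrier K" using ab vecs_carr by auto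
  thus "vsmult K c (vadd K a b) j = vadd K (vsmult K c a) (vsmult K c b) j"
    using c by (simp add: vapp r_distr)
qed

lemma subspace_sum:
  assumes X: "subspace K n X" and Y: "subspace K n Y"
  shows "subspace K n (vsum X Y)"
proof -
  have XV: "X \<subseteq> V" and YV: "Y \<subseteq> V" using X Y by (auto simp: subspace_def)
  show ?thesis unfolding subspace_def
  proof (intro conjI ballI)
    show "vsum X Y \<subseteq> V"
    proof
      fix s assume "s \<in> vsum X Y"
      then obtain v w where vw: "v \<in> X" "w \<in> Y" "s = vadd K v w" unfolding vsum_def by blast
      have "v \<in> V" "w \<in> V" using vw(1,2) XV YV by blast+
      thus "s \<in> V" unfolding vw(3) by (rule vadd_closed)
    qed
    have e: "vzero K = vadd K (vzero K) (vzero K)" by simp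
    have "vzero K \<in> X" "vzero K \<in> Y" using X Y unfolding subspace_def by blast+
    thus "vzero K \<in> vsum X Y" unfolding vsum_def using e by blast
  next
    fix s t assume "s \<in> vsum X Y" "t \<in> vsum X Y"
    then obtain a b c d where abcd: "a \<in> X" "b \<in> Y" "c \<in> X" "d \<in> Y" "s = vadd K a b" "t = vadd K c d"
      unfolding vsum_def by blast
    have V4: "a \<in> V" "b \<in> V" "c \<in> V" "d \<in> V" using abcd(1-4) XV YV by blast+
    have "vadd K s t = vadd K (vadd K a c) (vadd K b d)" unfolding abcd(5,6) using vadd_swap[OF V4] .
    moreover have "vadd K a c \<in> X" "vadd K b d \<in> Y" using abcd(1-4) X Y unfolding subspace_def by blast+
    ultimately show "vadd K s t \<in> vsum X Y" unfolding vsum_def by blast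
  next
    fix c s assume c: "c \<in> carrier K" and "s \<in> vsum X Y"
    then obtain a b where ab: "a \<in> X" "b \<in> Y" "s = vadd K a b" unfolding vsum_def by blast
    have V2: "a \<in> V" "b \<in> V" using ab(1,2) XV YV by blast+
    have "vsmult K c s = vadd K (vsmult K c a) (vsmult K c b)" unfolding ab(3) using vsmult_vadd[OF c V2] .
    moreover have "vsmult K c a \<in> X" "vsmult K c b \<in> Y" using ab(1,2) c X Y unfolding subspace_def by blast+
    ultimately show "vsmult K c s \<in> vsum X Y" unfolding vsum_def by blast
  qed
qed

lemma card_sum_inter:
  assumes X: "subspace K n X" and Y: "subspace K n Y"
  shows "card (vsum X Y) * card (X \<inter> Y) = card X * card Y"
proof -
  have XV: "X \<subseteq> V" and YV: "Y \<subseteq> V" using X Y unfolding subspace_def by blast+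
  have fX: "finite X" "finite Y" using subspace_fin X Y by blast+
  define g where "g p = vadd K (fst p) (snd p)" for p
  have img: "g ` (X \<times> Y) = vsum X Y" unfolding vsum_def g_def by force
  have fib: "card {p \<in> X \<times> Y. g p = s} = card (X \<inter> Y)" if s: "s \<in> vsum X Y" for s
  proof -
    obtain v0 w0 where vw0: "v0 \<in> X" "w0 \<in> Y" "s = vadd K v0 w0" using s unfolding vsum_def by blast
    have v0V: "v0 \<in> V" and w0V: "w0 \<in> V" using vw0 XV YV by blast+
    define h where "h u = (vadd K v0 u, vadd K w0 (vneg u))" for u
    have "{p \<in> X \<times> Y. g p = s} = h ` (X \<inter> Y)"
    proof
      show "{p \<in> X \<times> Y. g p = s} \<subseteq> h ` (X \<inter> Y)"
      proof
        fix p assume p: "p \<in> {p \<in> X \<times> Y. g p = s}"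
        obtain v w where pvw: "p = (v, w)" by (cases p)
        have vw: "v \<in> X" "w \<in> Y" "vadd K v w = vadd K v0 w0" using p pvw vw0(3) unfolding g_def by auto
        have vV: "v \<in> V" and wV: "w \<in> V" using vw XV YV by blast+
        define u where "u = vadd K (vneg v0) v"
        have nv0: "vneg v0 \<in> X" using subspace_neg[OF X vw0(1)] .
        have uX: "u \<in> X" unfolding u_def using X nv0 vw(1) unfolding subspace_def by blast
        have u2: "u = vadd K w0 (vneg w)"
        proof (rule ext)
          fix j
          have e: "v j \<oplus> w j = v0 j \<oplus> w0 j" using fun_cong[OF vw(3), of j] by (simp add: vapp)
          have c: "v j \<in> carrier K" "w j \<in> carrier K" "v0 j \<in> carrier K" "w0 j \<in> carrier K"
            using vV wV v0V w0V vecs_carr by blast+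
          have "w0 j \<oplus> \<ominus> w j = (\<ominus> v0 j \<oplus> (v0 j \<oplus> w0 j)) \<oplus> \<ominus> w j" using c by algebra
          also have "\<dots> = (\<ominus> v0 j \<oplus> (v j \<oplus> w j)) \<oplus> \<ominus> w j" using e by simp
          also have "\<dots> = \<ominus> v0 j \<oplus> v j" using c by algebra
          finally have "\<ominus> v0 j \<oplus> v j = w0 j \<oplus> \<ominus> w j" by simp
          moreover have "u j = \<ominus> v0 j \<oplus> v j" unfolding u_def vadd_app using vneg_app[OF v0V] by simp
          moreover have "vadd K w0 (vneg w) j = w0 j \<oplus> \<ominus> w j" unfolding vadd_app using vneg_app[OF wV] by simp
          ultimately show "u j = vadd K w0 (vneg w) j" by simp
        qed
        have nw: "vneg w \<in> Y" using subspace_neg[OF Y vw(2)] .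
        have uY: "u \<in> Y" unfolding u2 using Y vw0(2) nw unfolding subspace_def by blast
        have h1: "vadd K v0 u = v" unfolding u_def using vneg_add_cancel[OF v0V vV] .
        have h2: "vadd K w0 (vneg u) = w"
        proof (rule ext)
          fix j
          have c: "w j \<in> carrier K" "w0 j \<in> carrier K" using wV w0V vecs_carr by blast+
          have uV: "u \<in> V" using uX XV by blast
          have "vadd K w0 (vneg u) j = w0 j \<oplus> \<ominus> u j" unfolding vadd_app using vneg_app[OF uV] by simp
          also have "u j = w0 j \<oplus> \<ominus> w j" unfolding u2 vadd_app using vneg_app[OF wV] by simp
          also have "w0 j \<oplus> \<ominus> (w0 j \<oplus> \<ominus> w j) = w j" using c by algebra
          finally show "vadd K w0 (vneg u) j = w j" .
        qed
        have "h u = p" unfolding h_def pvw using h1 h2 by simp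
        moreover have "u \<in> X \<inter> Y" using uX uY by blast
        ultimately show "p \<in> h ` (X \<inter> Y)" by blast
      qed
      show "h ` (X \<inter> Y) \<subseteq> {p \<in> X \<times> Y. g p = s}"
      proof
        fix p assume "p \<in> h ` (X \<inter> Y)"
        then obtain u where u: "u \<in> X" "u \<in> Y" and pu: "p = h u" by blast
        have uV: "u \<in> V" using u XV by blast
        have a1: "vadd K v0 u \<in> X" using X u(1) vw0(1) unfolding subspace_def by blast
        have nu: "vneg u \<in> Y" using subspace_neg[OF Y u(2)] .
        have a2: "vadd K w0 (vneg u) \<in> Y" using Y nu vw0(2) unfolding subspace_def by blast
        have a3: "vadd K (vadd K v0 u) (vadd K w0 (vneg u)) = s"
        proof (rule ext)
          fix j
          have c: "u j \<in> carrier K" "v0 j \<in> carrier K" "w0 j \<in> carrier K"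
            using uV v0V w0V vecs_carr by blast+
          have "(v0 j \<oplus> u j) \<oplus> (w0 j \<oplus> \<ominus> u j) = v0 j \<oplus> w0 j" using c by algebra
          moreover have "vadd K (vadd K v0 u) (vadd K w0 (vneg u)) j = (v0 j \<oplus> u j) \<oplus> (w0 j \<oplus> \<ominus> u j)"
            unfolding vadd_app using vneg_app[OF uV] by simp
          moreover have "s j = v0 j \<oplus> w0 j" unfolding vw0(3) vadd_app ..
          ultimately show "vadd K (vadd K v0 u) (vadd K w0 (vneg u)) j = s j" by simp
        qed
        show "p \<in> {p \<in> X \<times> Y. g p = s}" unfolding pu h_def g_def using a1 a2 a3 by simp
      qed
    qed
    moreover have "inj_on h (X \<inter> Y)"
    proof (rule inj_onI)
      fix x y assume x: "x \<in> X \<inter> Y" and y: "y \<in> X \<inter> Y" and e: "h x = h y"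
      have "vadd K v0 x = vadd K v0 y" using e unfolding h_def by simp
      moreover have "x \<in> V" "y \<in> V" using x y XV by blast+
      ultimately show "x = y" using vadd_cancel_left[OF v0V] by blast
    qed
    ultimately show ?thesis by (simp add: card_image)
  qed
  have "card (X \<times> Y) = card (vsum X Y) * card (X \<inter> Y)"
  proof (rule fiber_count[OF _ img])
    show "finite (X \<times> Y)" using fX by simp
    fix c assume "c \<in> vsum X Y" thus "card {p \<in> X \<times> Y. g p = c} = card (X \<inter> Y)" by (rule fib)
  qed
  thus ?thesis using fX by (simp add: card_cartesian_product)
qed

lemma dim_sum_inter:
  assumes X: "subspace K n X" and Y: "subspace K n Y"
  shows "vdim K (vsum X Y) + vdim K (X \<inter> Y) = vdim K X + vdim K Y"
proof -
  have "q ^ (vdim K (vsum X Y) + vdim K (X \<inter> Y)) = q ^ (vdim K X + vdim K Y)"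
    unfolding power_add card_dim[OF X, symmetric] card_dim[OF Y, symmetric]
      card_dim[OF subspace_sum[OF X Y], symmetric] card_dim[OF subspace_inter[OF X Y], symmetric]
    by (rule card_sum_inter[OF X Y])
  thus ?thesis using q_gt1 by (simp add: power_inject_exp)
qed

lemma perp_anti: "X \<subseteq> Y \<Longrightarrow> perp K n Y \<subseteq> perp K n X"
  by (auto simp: perp_ip)

lemma sub_vsum1: assumes X: "subspace K n X" and Y: "subspace K n Y" shows "X \<subseteq> vsum X Y"
proof
  fix x assume x: "x \<in> X"
  have "x \<in> V" using X x unfolding subspace_def by blast
  hence "x = vadd K x (vzero K)" by simp
  moreover have "vzero K \<in> Y" using Y unfolding subspace_def by blast
  ultimately show "x \<in> vsum X Y" unfolding vsum_def using x by blast
qed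

lemma sub_vsum2: assumes X: "subspace K n X" and Y: "subspace K n Y" shows "Y \<subseteq> vsum X Y"
proof
  fix x assume x: "x \<in> Y"
  have "x \<in> V" using Y x unfolding subspace_def by blast
  hence "x = vadd K (vzero K) x" by simp
  moreover have "vzero K \<in> X" using X unfolding subspace_def by blast
  ultimately show "x \<in> vsum X Y" unfolding vsum_def using x by blast
qed

lemma perp_sum:
  assumes X: "subspace K n X" and Y: "subspace K n Y"
  shows "perp K n (vsum X Y) = perp K n X \<inter> perp K n Y"
proof
  show "perp K n (vsum X Y) \<subseteq> perp K n X \<inter> perp K n Y"
    using perp_anti[OF sub_vsum1[OF X Y]] perp_anti[OF sub_vsum2[OF X Y]] by auto
  have XV: "X \<subseteq> V" and YV: "Y \<subseteq> V" using X Y by (auto simp: subspace_def)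
  show "perp K n X \<inter> perp K n Y \<subseteq> perp K n (vsum X Y)"
  proof
    fix x assume x: "x \<in> perp K n X \<inter> perp K n Y"
    hence xV: "x \<in> V" by (auto simp: perp_ip)
    have "ip s x = \<zero>" if s: "s \<in> vsum X Y" for s
    proof -
      obtain v w where vw: "v \<in> X" "w \<in> Y" "s = vadd K v w" using s by (auto simp: vsum_def)
      have "ip s x = ip v x \<oplus> ip w x" using vw XV YV xV by (metis subsetD ip_add_l)
      thus ?thesis using x vw by (simp add: perp_ip)
    qed
    thus "x \<in> perp K n (vsum X Y)" using xV by (simp add: perp_ip)
  qed
qed

lemma perp_inter:
  assumes X: "subspace K n X" and Y: "subspace K n Y"
  shows "perp K n (X \<inter> Y) = vsum (perp K n X) (perp K n Y)"
proof -
  have XV: "X \<subseteq> V" and YV: "Y \<subseteq> V" using X Y by (auto simp: subspace_def)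
  have PX: "subspace K n (perp K n X)" using subspace_perp[OF XV] .
  have PY: "subspace K n (perp K n Y)" using subspace_perp[OF YV] .
  have sub: "vsum (perp K n X) (perp K n Y) \<subseteq> perp K n (X \<inter> Y)"
  proof
    fix s assume "s \<in> vsum (perp K n X) (perp K n Y)"
    then obtain a b where ab: "a \<in> perp K n X" "b \<in> perp K n Y" "s = vadd K a b" by (auto simp: vsum_def)
    have aV: "a \<in> V" and bV: "b \<in> V" using ab by (auto simp: perp_ip)
    have "ip x s = \<zero>" if x: "x \<in> X \<inter> Y" for x
    proof -
      have "ip x s = ip x a \<oplus> ip x b" using ab aV bV x XV by (metis IntD1 subsetD ip_add_r)
      thus ?thesis using ab x by (simp add: perp_ip)
    qed
    thus "s \<in> perp K n (X \<inter> Y)" using ab aV bV by (simp add: perp_ip)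
  qed
  have d1: "vdim K (vsum (perp K n X) (perp K n Y)) + vdim K (perp K n X \<inter> perp K n Y)
      = vdim K (perp K n X) + vdim K (perp K n Y)" using dim_sum_inter[OF PX PY] .
  have d2: "vdim K (perp K n X \<inter> perp K n Y) + vdim K (vsum X Y) = n"
    using dim_perp[OF subspace_sum[OF X Y]] perp_sum[OF X Y] by simp
  have d3: "vdim K (vsum X Y) + vdim K (X \<inter> Y) = vdim K X + vdim K Y" using dim_sum_inter[OF X Y] .
  have d4: "vdim K (perp K n (X \<inter> Y)) + vdim K (X \<inter> Y) = n" using dim_perp[OF subspace_inter[OF X Y]] .
  have deq: "vdim K (vsum (perp K n X) (perp K n Y)) = vdim K (perp K n (X \<inter> Y))"
    using d1 d2 d3 d4 dim_perp[OF X] dim_perp[OF Y] by linarith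
  have "X \<inter> Y \<subseteq> V" using XV by blast
  hence PXY: "subspace K n (perp K n (X \<inter> Y))" by (rule subspace_perp)
  have "vsum (perp K n X) (perp K n Y) = perp K n (X \<inter> Y)"
    using dim_eq_imp_eq[OF subspace_sum[OF PX PY] PXY sub deq] .
  thus ?thesis by simp
qed

lemma line_props:
  assumes aV: "a \<in> V" and a0: "a \<noteq> vzero K"
  shows "subspace K n (span K {a})" "vdim K (span K {a}) = 1"
    "\<And>X. subspace K n X \<Longrightarrow> a \<notin> X \<Longrightarrow> X \<inter> span K {a} = {vzero K}"
    "a \<in> span K {a}"
proof -
  show S: "subspace K n (span K {a})" using span_subspace[of "{a}"] aV by simp
  have lc: "lincomb K c {a} = vsmult K (c a) a" if "c a \<in> carrier K" for c
    using lincomb_insert[of "{}" a c] aV that by simp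
  have li: "lin_indep K {a}" unfolding lin_indep_def
  proof (intro conjI allI impI ballI)
    fix c b assume c: "c \<in> {a} \<rightarrow> carrier K" and z: "lincomb K c {a} = vzero K" and b: "b \<in> {a}"
    obtain j where j: "j < n" "a j \<noteq> \<zero>" using nonzero_coord[OF aV a0] by blast
    have "c a \<otimes> a j = \<zero>" using fun_cong[OF z, of j] lc[of c] c by (simp add: vapp)
    hence "c a = \<zero>" using j c aV vecs_carr integral_iff by (metis PiE singletonI)
    thus "c b = \<zero>" using b by simp
  qed simp
  show "vdim K (span K {a}) = 1" using dim_unique[OF S] card_span[OF li] aV by simp
  show "a \<in> span K {a}" using in_span[of "{a}" a] aV by simp
  fix X assume X: "subspace K n X" and aX: "a \<notin> X"
  show "X \<inter> span K {a} = {vzero K}"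
  proof
    show "{vzero K} \<subseteq> X \<inter> span K {a}" using X S by (simp add: subspace_def)
    show "X \<inter> span K {a} \<subseteq> {vzero K}"
    proof
      fix x assume x: "x \<in> X \<inter> span K {a}"
      then obtain c where c: "c \<in> {a} \<rightarrow> carrier K" "x = lincomb K c {a}" by (auto simp: span_def)
      have ca: "c a \<in> carrier K" using c by auto
      have xe: "x = vsmult K (c a) a" using c lc ca by simp
      show "x \<in> {vzero K}"
      proof (cases "c a = \<zero>")
        case True thus ?thesis using xe aV by (auto intro!: ext simp: vapp vecs_carr)
      next
        case False
        have "vsmult K (inv (c a)) x = a"
          using xe inv_facts[OF ca False] aV ca by (intro ext) (simp add: vapp vecs_carr m_assoc[symmetric])
        moreover have "vsmult K (inv (c a)) x \<in> X" using X x inv_facts[OF ca False] by (simp add: subspace_def)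
        ultimately show ?thesis using aX by simp
      qed
    qed
  qed
qed

end


context fvs begin
lemma vsum_sub:
  assumes Z: "subspace K n Z" and XZ: "X \<subseteq> Z" and YZ: "Y \<subseteq> Z"
  shows "vsum X Y \<subseteq> Z"
proof
  fix s assume "s \<in> vsum X Y"
  then obtain v w where vw: "v \<in> X" "w \<in> Y" "s = vadd K v w" unfolding vsum_def by blast
  have "v \<in> Z" "w \<in> Z" using vw XZ YZ by blast+
  thus "s \<in> Z" using Z vw(3) unfolding subspace_def by blast
qed
end

locale fam =
  fixes l :: nat and K :: "nat \<Rightarrow> ('a, 'b) ring_scheme" and n :: "nat \<Rightarrow> nat"
  assumes H: "\<forall>i<l. field (K i) \<and> finite (carrier (K i))"
begin

lemma fvsI: "i < l \<Longrightarrow> fvs (K i)"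
  using H by (simp add: fvs_def fvs_axioms_def)

lemma PL_sub: "L \<in> PL l K n \<Longrightarrow> i < l \<Longrightarrow> subspace (K i) (n i) (L i)"
  by (simp add: PL_def)

lemma PL_high: "L \<in> PL l K n \<Longrightarrow> l \<le> i \<Longrightarrow> L i = {}"
  by (simp add: PL_def)

lemma PLI: "(\<And>i. i < l \<Longrightarrow> subspace (K i) (n i) (L i)) \<Longrightarrow> (\<And>i. l \<le> i \<Longrightarrow> L i = {}) \<Longrightarrow> L \<in> PL l K n"
  by (simp add: PL_def)

lemma Psum_i: "i < l \<Longrightarrow> Psum l K L L' i = fvs.vsum (K i) (L i) (L' i)"
proof -
  assume i: "i < l"
  interpret fvs "K i" "n i" using fvsI[OF i] .
  show ?thesis using i by (simp add: Psum_def vsum_def)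
qed

lemma Psum_PL: "L \<in> PL l K n \<Longrightarrow> L' \<in> PL l K n \<Longrightarrow> Psum l K L L' \<in> PL l K n"
proof (rule PLI)
  fix i assume L: "L \<in> PL l K n" "L' \<in> PL l K n" and i: "i < l"
  interpret fvs "K i" "n i" using fvsI[OF i] .
  show "subspace (K i) (n i) (Psum l K L L' i)"
    using subspace_sum PL_sub L i Psum_i by simp
qed (simp add: Psum_def)

lemma Pinter_PL: "L \<in> PL l K n \<Longrightarrow> L' \<in> PL l K n \<Longrightarrow> Pinter L L' \<in> PL l K n"
proof (rule PLI)
  fix i assume L: "L \<in> PL l K n" "L' \<in> PL l K n" and i: "i < l"
  interpret fvs "K i" "n i" using fvsI[OF i] .
  show "subspace (K i) (n i) (Pinter L L' i)"
    using subspace_inter PL_sub L i by (simp add: Pinter_def)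
qed (simp_all add: Pinter_def PL_high)

lemma Pperp_PL: "L \<in> PL l K n \<Longrightarrow> Pperp l K n L \<in> PL l K n"
proof (rule PLI)
  fix i assume L: "L \<in> PL l K n" and i: "i < l"
  interpret fvs "K i" "n i" using fvsI[OF i] .
  have "L i \<subseteq> V" using PL_sub[OF L i] unfolding subspace_def by blast
  thus "subspace (K i) (n i) (Pperp l K n L i)"
    using subspace_perp i by (simp add: Pperp_def)
qed (simp add: Pperp_def)

lemma Ptop_PL: "Ptop l K n \<in> PL l K n"
proof (rule PLI)
  fix i assume i: "i < l"
  interpret fvs "K i" "n i" using fvsI[OF i] .
  show "subspace (K i) (n i) (Ptop l K n i)"
    using subspace_vecs i by (simp add: Ptop_def)
qed (simp add: Ptop_def)

lemma Rk_sum_inter: "L \<in> PL l K n \<Longrightarrow> L' \<in> PL l K n \<Longrightarrow>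
  Rk l K (Psum l K L L') + Rk l K (Pinter L L') = Rk l K L + Rk l K L'"
proof -
  assume L: "L \<in> PL l K n" "L' \<in> PL l K n"
  have "\<And>i. i < l \<Longrightarrow> int (vdim (K i) (Psum l K L L' i)) + int (vdim (K i) (Pinter L L' i))
     = int (vdim (K i) (L i)) + int (vdim (K i) (L' i))"
  proof -
    fix i assume i: "i < l"
    interpret fvs "K i" "n i" using fvsI[OF i] .
    show "?thesis i" using dim_sum_inter[OF PL_sub[OF L(1) i] PL_sub[OF L(2) i]] Psum_i[OF i]
      by (simp add: Pinter_def)
  qed
  thus ?thesis unfolding Rk_def by (simp add: sum.distrib[symmetric])
qed

lemma Rk_top: "Rk l K (Ptop l K n) = (\<Sum>i<l. int (n i))"
  unfolding Rk_def
proof (rule sum.cong)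
  fix i assume "i \<in> {..<l}"
  hence i: "i < l" by simp
  interpret fvs "K i" "n i" using fvsI[OF i] .
  show "int (vdim (K i) (Ptop l K n i)) = int (n i)" using dim_vecs i by (simp add: Ptop_def)
qed simp

lemma Rk_perp: "L \<in> PL l K n \<Longrightarrow> Rk l K (Pperp l K n L) = Rk l K (Ptop l K n) - Rk l K L"
proof -
  assume L: "L \<in> PL l K n"
  have "\<And>i. i < l \<Longrightarrow> int (vdim (K i) (Pperp l K n L i)) = int (n i) - int (vdim (K i) (L i))"
  proof -
    fix i assume i: "i < l"
    interpret fvs "K i" "n i" using fvsI[OF i] .
    show "?thesis i" using dim_perp[OF PL_sub[OF L i]] i by (simp add: Pperp_def)
  qed
  thus ?thesis unfolding Rk_top unfolding Rk_def by (simp add: sum_subtractf[symmetric])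
qed

lemma Pperp_sum: "L \<in> PL l K n \<Longrightarrow> L' \<in> PL l K n \<Longrightarrow>
  Pperp l K n (Psum l K L L') = Pinter (Pperp l K n L) (Pperp l K n L')"
proof (rule ext)
  fix i assume L: "L \<in> PL l K n" "L' \<in> PL l K n"
  show "Pperp l K n (Psum l K L L') i = Pinter (Pperp l K n L) (Pperp l K n L') i"
  proof (cases "i < l")
    case True
    interpret fvs "K i" "n i" using fvsI[OF True] .
    show ?thesis using perp_sum[OF PL_sub[OF L(1) True] PL_sub[OF L(2) True]] Psum_i[OF True] True
      by (simp add: Pperp_def Pinter_def)
  qed (simp add: Pperp_def Pinter_def)
qed

lemma Pperp_inter: "L \<in> PL l K n \<Longrightarrow> L' \<in> PL l K n \<Longrightarrow>
  Pperp l K n (Pinter L L') = Psum l K (Pperp l K n L) (Pperp l K n L')"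
proof (rule ext)
  fix i assume L: "L \<in> PL l K n" "L' \<in> PL l K n"
  show "Pperp l K n (Pinter L L') i = Psum l K (Pperp l K n L) (Pperp l K n L') i"
  proof (cases "i < l")
    case True
    interpret fvs "K i" "n i" using fvsI[OF True] .
    show ?thesis using perp_inter[OF PL_sub[OF L(1) True] PL_sub[OF L(2) True]] Psum_i[OF True] True
      by (simp add: Pperp_def Pinter_def)
  qed (simp add: Pperp_def Psum_def)
qed

lemma Pperp_anti: "Pincl l L L' \<Longrightarrow> Pincl l (Pperp l K n L') (Pperp l K n L)"
proof -
  assume "Pincl l L L'"
  thus ?thesis unfolding Pincl_def
  proof (intro allI impI)
    fix i assume a: "\<forall>i<l. L i \<subseteq> L' i" and i: "i < l"
    interpret fvs "K i" "n i" using fvsI[OF i] .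
    show "Pperp l K n L' i \<subseteq> Pperp l K n L i" using perp_anti a i by (simp add: Pperp_def)
  qed
qed

lemma Pperp_top: "Pincl l (Pperp l K n L) (Ptop l K n)"
  unfolding Pincl_def Pperp_def Ptop_def perp_def by auto

end


context fam begin

lemma Rk_mono: "B \<in> PL l K n \<Longrightarrow> A \<in> PL l K n \<Longrightarrow> Pincl l B A \<Longrightarrow> Rk l K B \<le> Rk l K A"
  unfolding Rk_def
proof (rule sum_mono)
  fix i assume B: "B \<in> PL l K n" and A: "A \<in> PL l K n" and inc: "Pincl l B A" and "i \<in> {..<l}"
  hence i: "i < l" by simp
  interpret fvs "K i" "n i" using fvsI[OF i] .
  show "int (vdim (K i) (B i)) \<le> int (vdim (K i) (A i))"
    using dim_le[OF PL_sub[OF B i] PL_sub[OF A i]] inc i by (simp add: Pincl_def)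
qed

lemma step:
  assumes rf: "rank_function l K n \<rho>"
    and B: "B \<in> PL l K n" and A: "A \<in> PL l K n" and inc: "Pincl l B A" and ne: "A \<noteq> B"
  shows "\<exists>C\<in>PL l K n. Pincl l C A \<and> Rk l K C = Rk l K B + 1 \<and> \<rho> C \<le> \<rho> B + 1"
proof -
  obtain i where i: "i < l" "B i \<noteq> A i"
    using ne PL_high[OF A] PL_high[OF B] by (metis ext not_le)
  interpret fvs "K i" "n i" using fvsI[OF i(1)] .
  have BiAi: "B i \<subseteq> A i" using inc i by (simp add: Pincl_def)
  then obtain a where a: "a \<in> A i" "a \<notin> B i" using i by blast
  have SA: "subspace (K i) (n i) (A i)" and SB: "subspace (K i) (n i) (B i)"
    using PL_sub A B i by auto
  have aV: "a \<in> vecs (K i) (n i)" using SA a by (auto simp: subspace_def)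
  have a0: "a \<noteq> vzero (K i)" using SB a by (auto simp: subspace_def)
  note lp = line_props[OF aV a0]
  define E where "E = (\<lambda>j. if j = i then span (K i) {a} else if j < l then {vzero (K j)} else {})"
  have EPL: "E \<in> PL l K n"
  proof (rule PLI)
    fix j assume j: "j < l"
    interpret J: fvs "K j" "n j" using fvsI[OF j] .
    show "subspace (K j) (n j) (E j)" using lp(1) J.subspace_zero j by (simp add: E_def)
  qed (use i in \<open>auto simp: E_def\<close>)
  define C where "C = Psum l K B E"
  have CPL: "C \<in> PL l K n" using Psum_PL[OF B EPL] by (simp add: C_def)
  have IPL: "Pinter B E \<in> PL l K n" using Pinter_PL[OF B EPL] .
  have CA: "Pincl l C A" unfolding Pincl_def
  proof (intro allI impI)
    fix j assume j: "j < l"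
    interpret J: fvs "K j" "n j" using fvsI[OF j] .
    have SAj: "subspace (K j) (n j) (A j)" and SBj: "subspace (K j) (n j) (B j)" using PL_sub A B j by auto
    have "E j \<subseteq> A j"
    proof (cases "j = i")
      case True
      thus ?thesis using span_sub[OF SA _ ] a by (simp add: E_def)
    next
      case False thus ?thesis using SAj j by (simp add: E_def subspace_def)
    qed
    moreover have "B j \<subseteq> A j" using inc j by (simp add: Pincl_def)
    ultimately show "C j \<subseteq> A j" using J.vsum_sub[OF SAj] Psum_i[OF j] by (simp add: C_def)
  qed
  have RkE: "Rk l K E = 1"
  proof -
    have "Rk l K E = (\<Sum>j<l. if j = i then 1 else 0)" unfolding Rk_def
    proof (rule sum.cong)
      fix j assume "j \<in> {..<l}"
      hence j: "j < l" by simp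
      interpret J: fvs "K j" "n j" using fvsI[OF j] .
      show "int (vdim (K j) (E j)) = (if j = i then 1 else 0)"
        using lp(2) J.dim_zero j by (simp add: E_def)
    qed simp
    also have "\<dots> = 1" using i by simp
    finally show ?thesis .
  qed
  have RkI: "Rk l K (Pinter B E) = 0" unfolding Rk_def
  proof (rule sum.neutral, rule ballI)
    fix j assume "j \<in> {..<l}"
    hence j: "j < l" by simp
    interpret J: fvs "K j" "n j" using fvsI[OF j] .
    have SBj: "subspace (K j) (n j) (B j)" using PL_sub B j by auto
    have "Pinter B E j = {vzero (K j)}"
    proof (cases "j = i")
      case True thus ?thesis using lp(3)[OF SB a(2)] by (simp add: Pinter_def E_def)
    next
      case False thus ?thesis using SBj j by (auto simp: Pinter_def E_def subspace_def)
    qed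
    thus "int (vdim (K j) (Pinter B E j)) = 0" using J.dim_zero by simp
  qed
  have RkC: "Rk l K C = Rk l K B + 1" using Rk_sum_inter[OF B EPL] RkE RkI by (simp add: C_def)
  have r3: "\<rho> C + \<rho> (Pinter B E) \<le> \<rho> B + \<rho> E" using rf B EPL unfolding rank_function_def C_def by blast
  have "0 \<le> \<rho> (Pinter B E)" using rf IPL unfolding rank_function_def by blast
  moreover have "\<rho> E \<le> Rk l K E" using rf EPL unfolding rank_function_def by blast
  hence "\<rho> E \<le> 1" using RkE by simp
  ultimately have "\<rho> C \<le> \<rho> B + 1" using r3 by linarith
  thus ?thesis using CPL CA RkC by blast
qed

lemma key_aux:
  assumes rf: "rank_function l K n \<rho>" and A: "A \<in> PL l K n"
  shows "\<forall>B. B \<in> PL l K n \<longrightarrow> Pincl l B A \<longrightarrow> Rk l K A - Rk l K B = int d \<longrightarrow> \<rho> A \<le> \<rho> B + Rk l K A - Rk l K B"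
proof (induction d)
  case 0
  show ?case
  proof (intro allI impI)
    fix B assume B: "B \<in> PL l K n" and inc: "Pincl l B A" and d: "Rk l K A - Rk l K B = int 0"
    show "\<rho> A \<le> \<rho> B + Rk l K A - Rk l K B"
    proof (cases "A = B")
      case False
      then obtain C where C: "C \<in> PL l K n" "Pincl l C A" "Rk l K C = Rk l K B + 1"
        using step[OF rf B A inc] by blast
      have "Rk l K C \<le> Rk l K A" using Rk_mono[OF C(1) A C(2)] .
      thus ?thesis using C d by simp
    qed simp
  qed
next
  case (Suc d)
  show ?case
  proof (intro allI impI)
    fix B assume B: "B \<in> PL l K n" and inc: "Pincl l B A" and d: "Rk l K A - Rk l K B = int (Suc d)"
    have "A \<noteq> B" using d by auto
    then obtain C where C: "C \<in> PL l K n" "Pincl l C A" "Rk l K C = Rk l K B + 1" "\<rho> C \<le> \<rho> B + 1"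
      using step[OF rf B A inc] by blast
    have dC: "Rk l K A - Rk l K C = int d" using C(3) d by simp
    have "\<rho> A \<le> \<rho> C + Rk l K A - Rk l K C" using Suc.IH[rule_format, OF C(1) C(2) dC] .
    thus "\<rho> A \<le> \<rho> B + Rk l K A - Rk l K B" using C by simp
  qed
qed

lemma key:
  assumes rf: "rank_function l K n \<rho>" and A: "A \<in> PL l K n" and B: "B \<in> PL l K n" and inc: "Pincl l B A"
  shows "\<rho> A \<le> \<rho> B + Rk l K A - Rk l K B"
proof -
  have "0 \<le> Rk l K A - Rk l K B" using Rk_mono[OF B A inc] by simp
  then obtain d where "Rk l K A - Rk l K B = int d" by (metis nonneg_eq_int)
  thus ?thesis using key_aux[OF rf A, of d] B inc by blast
qed

lemma dual_is_rank:
  assumes rf: "rank_function l K n \<rho>"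
  shows "rank_function l K n (dual_rank l K n \<rho>)"
proof -
  let ?T = "Ptop l K n"
  have mono: "\<And>L L'. L \<in> PL l K n \<Longrightarrow> L' \<in> PL l K n \<Longrightarrow> Pincl l L L' \<Longrightarrow> \<rho> L \<le> \<rho> L'"
    using rf by (simp add: rank_function_def)
  have sub: "\<And>L L'. L \<in> PL l K n \<Longrightarrow> L' \<in> PL l K n \<Longrightarrow> \<rho> (Psum l K L L') + \<rho> (Pinter L L') \<le> \<rho> L + \<rho> L'"
    using rf by (simp add: rank_function_def)
  show ?thesis unfolding rank_function_def
  proof (intro conjI ballI impI)
    fix L assume L: "L \<in> PL l K n"
    have "\<rho> ?T \<le> \<rho> (Pperp l K n L) + Rk l K ?T - Rk l K (Pperp l K n L)"
      using key[OF rf Ptop_PL Pperp_PL[OF L] Pperp_top] .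
    thus "0 \<le> dual_rank l K n \<rho> L" using Rk_perp[OF L] by (simp add: dual_rank_def)
    have "\<rho> (Pperp l K n L) \<le> \<rho> ?T" using mono[OF Pperp_PL[OF L] Ptop_PL Pperp_top] .
    thus "dual_rank l K n \<rho> L \<le> Rk l K L" by (simp add: dual_rank_def)
  next
    fix L L' assume L: "L \<in> PL l K n" and L': "L' \<in> PL l K n" and inc: "Pincl l L L'"
    have "\<rho> (Pperp l K n L) \<le> \<rho> (Pperp l K n L') + Rk l K (Pperp l K n L) - Rk l K (Pperp l K n L')"
      using key[OF rf Pperp_PL[OF L] Pperp_PL[OF L'] Pperp_anti[OF inc]] .
    thus "dual_rank l K n \<rho> L \<le> dual_rank l K n \<rho> L'"
      using Rk_perp[OF L] Rk_perp[OF L'] by (simp add: dual_rank_def)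
  next
    fix L L' assume L: "L \<in> PL l K n" and L': "L' \<in> PL l K n"
    have s: "\<rho> (Psum l K (Pperp l K n L) (Pperp l K n L')) + \<rho> (Pinter (Pperp l K n L) (Pperp l K n L'))
        \<le> \<rho> (Pperp l K n L) + \<rho> (Pperp l K n L')" using sub[OF Pperp_PL[OF L] Pperp_PL[OF L']] .
    have rk: "Rk l K (Psum l K L L') + Rk l K (Pinter L L') = Rk l K L + Rk l K L'" using Rk_sum_inter[OF L L'] .
    show "dual_rank l K n \<rho> (Psum l K L L') + dual_rank l K n \<rho> (Pinter L L')
        \<le> dual_rank l K n \<rho> L + dual_rank l K n \<rho> L'"
      using s rk Pperp_sum[OF L L'] Pperp_inter[OF L L'] by (simp add: dual_rank_def)
  qed
qed

end

theorem mainTheorem2: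
  fixes l :: nat and n :: "nat \<Rightarrow> nat" and K :: "nat \<Rightarrow> ('a, 'b) ring_scheme"
    and \<rho> :: "(nat \<Rightarrow> (nat \<Rightarrow> 'a) set) \<Rightarrow> int"
  assumes "0 < l"
    and "\<forall>i<l. 0 < n i"
    and "\<forall>i<l. field (K i) \<and> finite (carrier (K i))"
    and "rank_function l K n \<rho>"
  shows "rank_function l K n (dual_rank l K n \<rho>)"
proof -
  interpret fam l K n using assms(3) by (simp add: fam_def)
  show ?thesis using dual_is_rank[OF assms(4)] .
qed


end
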